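(* Let $k\ge1$ and $r\ge0$ be integers, and let $\mathcal{C}$ be a multiset of $2^k+r$ non-zero residues modulo $2^{k+1}$ such that no sub-collection sums to $2^k$ modulo $2^{k+1}$, and such that for no odd $\lambda$ can $\lambda\cdot\mathcal{C}$ be type 1 compressed. Fix $i$ and a sub-multiset $\mathcal{C}_i\subseteq\mathcal{C}$ with $|\mathcal{C}_i|=i$. Choose an element $x$ of $\mathcal{C}\setminus\mathcal{C}_i$ so that, with $\mathcal{C}_{i+1}=\mathcal{C}_i\cup\{x\}$, the size $|\mathcal{C}_{i+1}^*\setminus\mathcal{C}_i^*|$ is maximal. Then $|\mathcal{C}_{i+1}^*\setminus\mathcal{C}_i^*|>2$ unless at least one of the following holds: (1) $|\mathcal{C}_i^*|\le5$ or $|\mathcal{C}_i^*|\ge2^{k+1}-5$; (2) all elements of $\mathcal{C}\setminus\mathcal{C}_i$ are even; (3) there is an odd residue $u$ such that every element of $\mathcal{C}\setminus\mathcal{C}_i$ lies in $\{u,-u,2^k-u,-(2^k-u)\}$ modulo $2^{k+1}$.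
   Context: Multisets are called collections; $\mathcal{C}\setminus\mathcal{C}_i$ is the multiset difference. For a multiset $\mathcal{D}=\{a_1,\dots,a_d\}$ of residues modulo $2^{k+1}$, $\mathcal{D}^*=\{\sum_{i\in I}a_i \bmod 2^{k+1}: I\subseteq[d]\}$ (including $0$). $\lambda\cdot\mathcal{C}=\{\lambda c:c\in\mathcal{C}\}$. For a residue $t$, $|t|$ is the minimal absolute value of an integer in its residue class. A multiset $\mathcal{D}$ can be type 1 compressed if for some $\lambda>0$ it contains at least $\lambda$ elements each equal to $\pm1$ and also an element $t$ with $1<|t|\le\lambda+1$. *)

theory Defs
  imports Main "HOL-Library.Multiset"
begin

text \<open>Residues modulo m are represented by integers; all comparisons are made modulo m.\<close>

definition subset_sums :: "int \<Rightarrow> int multiset \<Rightarrow> int set" where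
  "subset_sums m D = {sum_mset S mod m | S. S \<subseteq># D}"

definition res_abs :: "int \<Rightarrow> int \<Rightarrow> int" where
  "res_abs m t = min (t mod m) (m - t mod m)"

definition type1_compressible :: "int \<Rightarrow> int multiset \<Rightarrow> bool" where
  "type1_compressible m D \<longleftrightarrow>
     (\<exists>lam::nat. lam > 0 \<and>
        size (filter_mset (\<lambda>a. a mod m = 1 mod m \<or> a mod m = (-1) mod m) D) \<ge> lam \<and>
        (\<exists>t\<in>#D. 1 < res_abs m t \<and> res_abs m t \<le> int lam + 1))"

definition scale_mset :: "int \<Rightarrow> int \<Rightarrow> int multiset \<Rightarrow> int multiset" where
  "scale_mset m lam C = image_mset (\<lambda>c. (lam * c) mod m) C"

end

theory Submission imports Defs "HOL-Number_Theory.Cong" begin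

definition cnt :: "int \<Rightarrow> (int \<Rightarrow> bool) \<Rightarrow> nat" where
  "cnt M Q = card {t \<in> {0..<M}. Q t}"

definition per :: "int \<Rightarrow> (int \<Rightarrow> bool) \<Rightarrow> bool" where
  "per M Q \<longleftrightarrow> (\<forall>a b. a mod M = b mod M \<longrightarrow> Q a = Q b)"

lemma first_change:
  fixes Q :: "int \<Rightarrow> bool"
  assumes "Q a" "\<not> Q b" "a < b"
  shows "\<exists>e. a < e \<and> e \<le> b \<and> \<not> Q e \<and> (\<forall>t. a \<le> t \<and> t < e \<longrightarrow> Q t)"
proof -
  define n where "n = (LEAST n::nat. \<not> Q (a + int n))"
  have ex: "\<not> Q (a + int (nat (b - a)))" using assms by simp
  have n1: "\<not> Q (a + int n)" unfolding n_def by (rule LeastI, rule ex)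
  have n2: "n \<le> nat (b - a)" unfolding n_def by (rule Least_le, rule ex)
  have n0: "n > 0" using n1 assms(1) by (cases n) auto
  have all: "Q t" if "a \<le> t" "t < a + int n" for t
  proof -
    have "nat (t - a) < n" using that by linarith
    then have "\<not> \<not> Q (a + int (nat (t - a)))" unfolding n_def by (rule not_less_Least)
    then show ?thesis using that by simp
  qed
  show ?thesis
    by (rule exI[of _ "a + int n"]) (use n0 n1 n2 all assms in auto)
qed

lemma up_step:
  fixes P :: "int \<Rightarrow> bool"
  assumes "\<not> P s" "P t" "s < t"
  shows "\<exists>w. s < w \<and> w \<le> t \<and> P w \<and> \<not> P (w - 1)"
proof -
  obtain e where e: "s < e" "e \<le> t" "P e" "\<forall>x. s \<le> x \<and> x < e \<longrightarrow> \<not> P x"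
    using first_change[of "\<lambda>x. \<not> P x" s t] assms by auto
  then show ?thesis by (intro exI[of _ e]) auto
qed

lemma mod_inj_interval:
  fixes M a :: int
  assumes "M > 0"
  shows "inj_on (\<lambda>t. t mod M) {a..<a+M}"
proof
  fix x y assume x: "x \<in> {a..<a+M}" and y: "y \<in> {a..<a+M}" and eq: "x mod M = y mod M"
  then have "M dvd (x - y)" by (simp add: mod_eq_dvd_iff)
  then obtain q where q: "x - y = M * q" by (auto elim: dvdE)
  have "q = 0"
  proof (rule ccontr)
    assume "q \<noteq> 0"
    then have "q \<ge> 1 \<or> q \<le> -1" by linarith
    moreover have False if "q \<ge> 1"
    proof -
      have "M * 1 \<le> M * q" using assms that by (intro mult_left_mono) auto
      then show False using x y q by simp
    qed
    moreover have False if "q \<le> -1"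
    proof -
      have "M * q \<le> M * (-1)" using assms that by (intro mult_left_mono) auto
      then show False using x y q by simp
    qed
    ultimately show False by blast
  qed
  then show "x = y" using q by simp
qed

lemma cnt_affine:
  fixes M y l c :: int
  assumes M: "M > 0" and per: "per M Q" and inv: "M dvd (y * l - 1)"
  shows "cnt M (\<lambda>t. Q (y * t + c)) = cnt M Q"
proof -
  let ?f = "\<lambda>t. (y * t + c) mod M"
  have inj: "inj_on ?f {t \<in> {0..<M}. Q (y * t + c)}"
  proof
    fix a b assume a: "a \<in> {t \<in> {0..<M}. Q (y * t + c)}" and b: "b \<in> {t \<in> {0..<M}. Q (y * t + c)}"
      and eq: "?f a = ?f b"
    then have "M dvd (y * a + c) - (y * b + c)" by (simp add: mod_eq_dvd_iff)
    then have "M dvd l * ((y * a + c) - (y * b + c))" by (rule dvd_mult)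
    moreover have "M dvd (y * l - 1) * (a - b)" using inv by (rule dvd_mult2)
    ultimately have "M dvd l * ((y * a + c) - (y * b + c)) - (y * l - 1) * (a - b)"
      using dvd_diff by blast
    moreover have "l * ((y * a + c) - (y * b + c)) - (y * l - 1) * (a - b) = a - b"
      by (simp add: algebra_simps)
    ultimately have "M dvd a - b" by simp
    then have "a mod M = b mod M" by (simp add: mod_eq_dvd_iff)
    moreover have "a \<in> {0..<0+M}" "b \<in> {0..<0+M}" using a b by auto
    ultimately show "a = b" using mod_inj_interval[OF M, of 0] by (auto simp: inj_on_def)
  qed
  have img: "?f ` {t \<in> {0..<M}. Q (y * t + c)} = {t \<in> {0..<M}. Q t}"
  proof
    show "?f ` {t \<in> {0..<M}. Q (y * t + c)} \<subseteq> {t \<in> {0..<M}. Q t}"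
    proof
      fix s assume "s \<in> ?f ` {t \<in> {0..<M}. Q (y * t + c)}"
      then obtain t where t: "Q (y * t + c)" "s = (y * t + c) mod M" by auto
      have "Q s = Q (y * t + c)" using per unfolding per_def t(2) by (metis mod_mod_trivial)
      then show "s \<in> {t \<in> {0..<M}. Q t}" using t M by auto
    qed
  next
    show "{t \<in> {0..<M}. Q t} \<subseteq> ?f ` {t \<in> {0..<M}. Q (y * t + c)}"
    proof
      fix s assume s: "s \<in> {t \<in> {0..<M}. Q t}"
      define t where "t = (l * (s - c)) mod M"
      have "M dvd (y * l - 1) * (s - c)" using inv by (rule dvd_mult2)
      moreover have "M dvd y * (l * (s - c) - t)"
      proof -
        have "(l * (s - c)) mod M = t mod M" unfolding t_def by simp
        then have "M dvd (l * (s - c) - t)" by (simp only: mod_eq_dvd_iff)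
        then show ?thesis by (rule dvd_mult)
      qed
      ultimately have "M dvd (y * l - 1) * (s - c) - y * (l * (s - c) - t)" using dvd_diff by blast
      moreover have "(y * l - 1) * (s - c) - y * (l * (s - c) - t) = (y * t + c) - s"
        by (simp add: algebra_simps)
      ultimately have "M dvd (y * t + c) - s" by simp
      then have eq: "(y * t + c) mod M = s mod M" by (simp add: mod_eq_dvd_iff)
      have "s mod M = s" using s by simp
      then have eq2: "?f t = s" using eq by simp
      have "Q (y * t + c) = Q s" using per eq unfolding per_def by blast
      then have "t \<in> {t \<in> {0..<M}. Q (y * t + c)}" using s M unfolding t_def by auto
      then show "s \<in> ?f ` {t \<in> {0..<M}. Q (y * t + c)}" using eq2 by force
    qed
  qed
  show ?thesis unfolding cnt_def using card_image[OF inj] img by simp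
qed

lemma cnt_split:
  "cnt M Q = cnt M (\<lambda>t. Q t \<and> R t) + cnt M (\<lambda>t. Q t \<and> \<not> R t)"
proof -
  have "{t \<in> {0..<M}. Q t} = {t \<in> {0..<M}. Q t \<and> R t} \<union> {t \<in> {0..<M}. Q t \<and> \<not> R t}" by auto
  moreover have "card ({t \<in> {0..<M}. Q t \<and> R t} \<union> {t \<in> {0..<M}. Q t \<and> \<not> R t}) =
      card {t \<in> {0..<M}. Q t \<and> R t} + card {t \<in> {0..<M}. Q t \<and> \<not> R t}"
    by (rule card_Un_disjoint) (rule finite_subset[of _ "{0..<M}"], auto)+
  ultimately show ?thesis unfolding cnt_def by simp
qed

lemma per_shift: "per M P \<Longrightarrow> per M (\<lambda>t. P (t + c))"
  unfolding per_def by (metis mod_add_left_eq)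

lemma per_and: "per M P \<Longrightarrow> per M R \<Longrightarrow> per M (\<lambda>t. P t \<and> R t)"
  unfolding per_def by metis

lemma per_not: "per M P \<Longrightarrow> per M (\<lambda>t. \<not> P t)"
  unfolding per_def by metis

lemma balance:
  assumes M: "M > 0" and per: "per M P"
  shows "cnt M (\<lambda>t. P t \<and> \<not> P (t - d)) = cnt M (\<lambda>t. \<not> P t \<and> P (t - d))"
proof -
  have 1: "cnt M P = cnt M (\<lambda>t. P t \<and> P (t - d)) + cnt M (\<lambda>t. P t \<and> \<not> P (t - d))"
    by (rule cnt_split)
  have 2: "cnt M (\<lambda>t. P (t - d)) = cnt M (\<lambda>t. P (t - d) \<and> P t) + cnt M (\<lambda>t. P (t - d) \<and> \<not> P t)"
    by (rule cnt_split)
  have 3: "cnt M (\<lambda>t. P (1 * t + (- d))) = cnt M P"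
    by (rule cnt_affine[OF M per, of 1 1]) simp
  have e1: "cnt M (\<lambda>t. P (t - d) \<and> P t) = cnt M (\<lambda>t. P t \<and> P (t - d))"
    unfolding cnt_def by (metis (lifting) conj_commute)
  have e2: "cnt M (\<lambda>t. P (t - d) \<and> \<not> P t) = cnt M (\<lambda>t. \<not> P t \<and> P (t - d))"
    unfolding cnt_def by (metis (lifting) conj_commute)
  show ?thesis using 1 2 3 e1 e2 by simp
qed

lemma neg_shift:
  assumes M: "M > 0" and per: "per M P"
  shows "cnt M (\<lambda>t. \<not> P t \<and> P (t - (M - d))) = cnt M (\<lambda>t. \<not> P t \<and> P (t - d))"
proof -
  have a: "cnt M (\<lambda>t. \<not> P t \<and> P (t - (M - d))) = cnt M (\<lambda>t. \<not> P t \<and> P (t + d))"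
  proof -
    have "P (t - (M - d)) = P (t + d)" for t
    proof -
      have "(t - (M - d)) mod M = (t + d) mod M" by (simp add: mod_eq_dvd_iff)
      then show ?thesis using per unfolding per_def by blast
    qed
    then show ?thesis by simp
  qed
  let ?Q = "\<lambda>t. \<not> P t \<and> P (t + d)"
  have pq: "per M ?Q" using per by (intro per_and per_not per_shift)
  have b: "cnt M (\<lambda>t. ?Q (1 * t + (- d))) = cnt M ?Q"
    by (rule cnt_affine[OF M pq, of 1 1]) simp
  have c: "cnt M (\<lambda>t. ?Q (1 * t + (- d))) = cnt M (\<lambda>t. P t \<and> \<not> P (t - d))"
    unfolding cnt_def by (rule arg_cong[where f=card]) auto
  show ?thesis using a b c balance[OF M per, of d] by simp
qed


lemma two_int:
  fixes M a x1 y1 x2 y2 :: int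
  assumes M: "M > 0" and per: "per M Q"
    and r1: "\<forall>t. x1 \<le> t \<and> t < y1 \<longrightarrow> a \<le> t \<and> t < a + M \<and> Q t"
    and r2: "\<forall>t. x2 \<le> t \<and> t < y2 \<longrightarrow> a \<le> t \<and> t < a + M \<and> Q t"
    and disj: "\<forall>t. \<not> ((x1 \<le> t \<and> t < y1) \<and> (x2 \<le> t \<and> t < y2))"
  shows "nat (y1 - x1) + nat (y2 - x2) \<le> cnt M Q"
proof -
  let ?S = "{x1..<y1} \<union> {x2..<y2}"
  have cS: "card ?S = nat (y1 - x1) + nat (y2 - x2)"
  proof -
    have "t \<notin> {x2..<y2}" if "t \<in> {x1..<y1}" for t using disj that
      by (metis atLeastLessThan_iff)
    then have "{x1..<y1} \<inter> {x2..<y2} = {}" by blast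
    then show ?thesis by (subst card_Un_disjoint) auto
  qed
  have sub: "?S \<subseteq> {a..<a+M}"
  proof
    fix t assume "t \<in> ?S"
    then have "(x1 \<le> t \<and> t < y1) \<or> (x2 \<le> t \<and> t < y2)" by auto
    then show "t \<in> {a..<a+M}" using r1 r2 by auto
  qed
  have inj: "inj_on (\<lambda>t. t mod M) ?S"
    using inj_on_subset[OF mod_inj_interval[OF M, of a] sub] .
  have img: "(\<lambda>t. t mod M) ` ?S \<subseteq> {t \<in> {0..<M}. Q t}"
  proof
    fix s assume "s \<in> (\<lambda>t. t mod M) ` ?S"
    then obtain t where t: "t \<in> ?S" "s = t mod M" by blast
    have "(x1 \<le> t \<and> t < y1) \<or> (x2 \<le> t \<and> t < y2)" using t(1) by auto
    then have "Q t" using r1 r2 by auto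
    moreover have "Q (t mod M) = Q t" using per unfolding per_def by (metis mod_mod_trivial)
    ultimately show "s \<in> {t \<in> {0..<M}. Q t}" using t M by auto
  qed
  have "card ((\<lambda>t. t mod M) ` ?S) \<le> cnt M Q"
    unfolding cnt_def by (rule card_mono[OF _ img]) (rule finite_subset[of _ "{0..<M}"], auto)
  then show ?thesis using card_image[OF inj] cS by simp
qed

lemma num1:
  fixes r g d H :: int
  assumes "r + g = 2*H" "r \<ge> 6" "g \<ge> 6" "3 \<le> d" "d \<le> H - 2"
    "nat (min r d - max 0 (d - g)) \<le> 2"
  shows False
  using assms by (simp add: min_def max_def split: if_splits) linarith?

lemma num2:
  fixes r1 g1 r2 g2 d H :: int
  assumes "r1 \<ge> 1" "g1 \<ge> 1" "r2 \<ge> 1" "g2 \<ge> 1" "r1+g1+r2+g2 = 2*H"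
    "r1 + r2 \<ge> 6" "g1 + g2 \<ge> 6" "3 \<le> d" "d \<le> H - 2"
    "nat (min r1 d - max 0 (d - g2)) + nat (min r2 d - max 0 (d - g1)) \<le> 2"
    "nat (min g1 d - max 0 (d - r1)) + nat (min g2 d - max 0 (d - r2)) \<le> 2"
  shows False
  using assms by (simp add: min_def max_def split: if_splits) linarith?


lemma per_shift': "per M P \<Longrightarrow> per M (\<lambda>t. P (t - c))"
  unfolding per_def by (metis mod_diff_left_eq)

lemma fin_cnt: "finite {t \<in> {0..<(M::int)}. Q t}"
  by (rule finite_subset[of _ "{0..<M}"]) auto

lemma core2:
  fixes M H d :: int and P :: "int \<Rightarrow> bool"
  assumes MH: "M = 2*H" and per: "per M P"
    and c1: "6 \<le> cnt M P" and c2: "int (cnt M P) + 6 \<le> M"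
    and up1: "cnt M (\<lambda>t. \<not> P t \<and> P (t - 1)) \<le> 2"
    and upd: "cnt M (\<lambda>t. \<not> P t \<and> P (t - d)) \<le> 2"
    and d: "3 \<le> d" "d \<le> H - 2"
  shows False
proof -
  have M: "M > 0" using c1 c2 by linarith
  have perP: "P a = P b" if "a mod M = b mod M" for a b
    using per that unfolding per_def by blast
  have Pmod: "P (a mod M) = P a" for a by (rule perP) simp
  have PM: "P (a + M) = P a" for a by (rule perP) simp
  have Pm: "P (a - M) = P a" for a by (rule perP) simp
  have ccompl: "cnt M P + cnt M (\<lambda>t. \<not> P t) = nat M"
  proof -
    have "cnt M (\<lambda>t. True) = cnt M (\<lambda>t. True \<and> P t) + cnt M (\<lambda>t. True \<and> \<not> P t)"
      by (rule cnt_split)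
    moreover have "cnt M (\<lambda>t. True) = nat M"
    proof -
      have eq: "{t \<in> {0..<M}. True} = {0..<M}" by blast
      show ?thesis unfolding cnt_def by (simp only: eq card_atLeastLessThan_int)
    qed
    ultimately show ?thesis by simp
  qed
  define Up where "Up = {t \<in> {0..<M}. P t \<and> \<not> P (t - 1)}"
  have cUp: "card Up \<le> 2" using balance[OF M per, of 1] up1 unfolding cnt_def Up_def by simp
  have finUp: "finite Up" unfolding Up_def by (rule fin_cnt)
  have upw: "w mod M \<in> Up" if "P w" "\<not> P (w - 1)" for w
  proof -
    have "P (w mod M)" using that Pmod by simp
    moreover have "P (w mod M - 1) = P (w - 1)" by (rule perP) (simp add: mod_diff_left_eq)
    ultimately show ?thesis using that M unfolding Up_def by simp
  qed
  have Tp: "cnt M (\<lambda>t. P t \<and> \<not> P (t - d)) \<le> 2" using balance[OF M per, of d] upd by simp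
  obtain s0 where s0: "0 \<le> s0" "s0 < M" "\<not> P s0"
  proof (rule ccontr)
    assume "\<not> thesis"
    then have "\<forall>t. 0 \<le> t \<and> t < M \<longrightarrow> P t" using that by blast
    then have eq: "{t \<in> {0..<M}. P t} = {0..<M}" by auto
    have "cnt M P = nat M" unfolding cnt_def by (simp only: eq card_atLeastLessThan_int)
    then show False using c2 M by linarith
  qed
  obtain t0 where t0: "0 \<le> t0" "t0 < M" "P t0"
  proof (rule ccontr)
    assume "\<not> thesis"
    then have "\<forall>t. 0 \<le> t \<and> t < M \<longrightarrow> \<not> P t" using that by blast
    then have eq: "{t \<in> {0..<M}. P t} = {}" by auto
    have "cnt M P = 0" unfolding cnt_def by (simp only: eq card.empty)
    then show False using c1 by linarith
  qed
  have "Up \<noteq> {}"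
  proof -
    define t1 where "t1 = (if s0 < t0 then t0 else t0 + M)"
    have "P t1" "s0 < t1" using t0 s0 PM unfolding t1_def by auto
    then obtain w where "P w" "\<not> P (w - 1)" using up_step[of P s0 t1] s0(3) by blast
    then show ?thesis using upw by blast
  qed
  then have cUp': "card Up = 1 \<or> card Up = 2" using cUp finUp
    by (metis One_nat_def card_0_eq le_SucE numeral_2_eq_2 le_zero_eq)
  have zeros: "\<not> P t" if za: "\<not> P a" "\<forall>w. a < w \<and> w < b \<longrightarrow> \<not> (P w \<and> \<not> P (w - 1))"
    "a \<le> t" "t < b" for a b t
  proof
    assume Pt: "P t"
    then have "a < t" using za by (cases "a = t") auto
    then obtain w where "a < w" "w \<le> t" "P w" "\<not> P (w - 1)" using up_step[of P a t] za(1) Pt by blast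
    then show False using za by auto
  qed
  have run: "\<exists>e. u < e \<and> e < v \<and> (\<forall>t. u \<le> t \<and> t < e \<longrightarrow> P t) \<and> (\<forall>t. e \<le> t \<and> t < v \<longrightarrow> \<not> P t)"
    if ra: "P u" "\<not> P (v - 1)" "u < v" "\<forall>w. u < w \<and> w < v \<longrightarrow> \<not> (P w \<and> \<not> P (w - 1))" for u v
  proof -
    have "u \<noteq> v - 1" using ra by auto
    then have "u < v - 1" using ra by auto
    then obtain e where e: "u < e" "e \<le> v - 1" "\<not> P e" "\<forall>t. u \<le> t \<and> t < e \<longrightarrow> P t"
      using first_change[of P u "v - 1"] ra by auto
    have "\<forall>w. e < w \<and> w < v \<longrightarrow> \<not> (P w \<and> \<not> P (w - 1))" using ra(4) e(1) by auto
    then have "\<forall>t. e \<le> t \<and> t < v \<longrightarrow> \<not> P t" using zeros[OF e(3)] by blast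
    then show ?thesis using e by (intro exI[of _ e]) auto
  qed
  have modeq: "w = u" if "w mod M = u mod M" "a \<le> w" "w < a + M" "a \<le> u" "u < a + M" for w u a
    using mod_inj_interval[OF M, of a] that unfolding inj_on_def by auto
  have mx: "max 0 x \<ge> 0" "max 0 x \<ge> x" for x :: int by auto
  have mn: "min x y \<le> x" "min x y \<le> y" for x y :: int by auto
  from cUp' show False
  proof
    assume "card Up = 1"
    then obtain u where Uu: "Up = {u}" by (rule card_1_singletonE)
    then have u: "0 \<le> u" "u < M" "P u" "\<not> P (u - 1)" unfolding Up_def by auto
    have u2: "\<not> P (u + M - 1)" using u PM[of "u - 1"] by (simp add: algebra_simps)
    have noup: "\<forall>w. u < w \<and> w < u + M \<longrightarrow> \<not> (P w \<and> \<not> P (w - 1))"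
    proof (intro allI impI notI)
      fix w assume w: "u < w \<and> w < u + M" "P w \<and> \<not> P (w - 1)"
      then have "w mod M = u mod M" using upw Uu u by simp
      then have "w = u" using modeq[of w u u] w u by auto
      then show False using w by simp
    qed
    obtain e where e: "u < e" "e < u + M" "\<forall>t. u \<le> t \<and> t < e \<longrightarrow> P t" "\<forall>t. e \<le> t \<and> t < u + M \<longrightarrow> \<not> P t"
      using run[OF u(3) u2 _ noup] M by auto
    define r where "r = e - u"
    define g where "g = u + M - e"
    have "nat (e - u) + nat (u - u) \<le> cnt M P"
      by (rule two_int[OF M per, where a = u]) (use e in auto)
    then have rle: "r \<le> int (cnt M P)" unfolding r_def by simp
    have "nat (u + M - e) + nat (u - u) \<le> cnt M (\<lambda>t. \<not> P t)"
      by (rule two_int[OF M per_not[OF per], where a = u]) (use e in auto)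
    then have gle: "g \<le> int (cnt M (\<lambda>t. \<not> P t))" unfolding g_def by simp
    have "r + g = M" unfolding r_def g_def by simp
    then have r6: "r \<ge> 6" "g \<ge> 6" using rle gle ccompl c1 c2 M by linarith+
    have pnd: "per M (\<lambda>t. P t \<and> \<not> P (t - d))"
      by (intro per_and per_not per_shift' per)
    have "nat ((u + min r d) - (u + max 0 (d - g))) + nat (u - u) \<le> cnt M (\<lambda>t. P t \<and> \<not> P (t - d))"
    proof (rule two_int[OF M pnd, where a = u])
      show "\<forall>t. u + max 0 (d - g) \<le> t \<and> t < u + min r d \<longrightarrow> u \<le> t \<and> t < u + M \<and> P t \<and> \<not> P (t - d)"
      proof (intro allI impI)
        fix t assume t: "u + max 0 (d - g) \<le> t \<and> t < u + min r d"
        have "u \<le> t" "t < e" using t mx[of "d - g"] mn[of r d] unfolding r_def by linarith+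
        then have "P t" using e by auto
        have "e \<le> t - d + M" "t - d + M < u + M" using t mx[of "d - g"] mn[of r d] unfolding g_def by linarith+
        then have "\<not> P (t - d + M)" using e by auto
        then have "\<not> P (t - d)" using PM by simp
        then show "u \<le> t \<and> t < u + M \<and> P t \<and> \<not> P (t - d)" using \<open>P t\<close> \<open>u \<le> t\<close> \<open>t < e\<close> e by auto
      qed
    qed auto
    then have "nat (min r d - max 0 (d - g)) \<le> 2" using Tp by simp
    then show False using num1[of r g H d] r6 d MH \<open>r + g = M\<close> by linarith
  next
    assume "card Up = 2"
    then obtain x y where xy: "Up = {x, y}" "x \<noteq> y" by (auto simp: card_2_iff)
    define u1 where "u1 = min x y"
    define u2 where "u2 = max x y"
    have U12: "Up = {u1, u2}" "u1 < u2" using xy unfolding u1_def u2_def by (auto simp: min_def max_def)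
    then have u1: "0 \<le> u1" "u1 < M" "P u1" "\<not> P (u1 - 1)"
      and u2: "0 \<le> u2" "u2 < M" "P u2" "\<not> P (u2 - 1)" unfolding Up_def by auto
    have u1M: "\<not> P (u1 + M - 1)" using u1 PM[of "u1 - 1"] by (simp add: algebra_simps)
    have inU: "w = u1 \<or> w = u2" if "P w" "\<not> P (w - 1)" "u1 \<le> w" "w < u1 + M" for w
    proof -
      have "w mod M = u1 mod M \<or> w mod M = u2 mod M" using upw[OF that(1,2)] U12 u1 u2 by auto
      then show ?thesis
      proof
        assume h: "w mod M = u1 mod M"
        have "w = u1" by (rule modeq[of w u1 u1]) (use h that u1 in linarith)+
        then show ?thesis by simp
      next
        assume h: "w mod M = u2 mod M"
        have "w = u2" by (rule modeq[of w u2 u1]) (use h that u1 u2 U12(2) in linarith)+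
        then show ?thesis by simp
      qed
    qed
    have noup1: "\<forall>w. u1 < w \<and> w < u2 \<longrightarrow> \<not> (P w \<and> \<not> P (w - 1))"
    proof (intro allI impI notI)
      fix w assume w: "u1 < w \<and> w < u2" "P w \<and> \<not> P (w - 1)"
      have "u1 \<le> w" "w < u1 + M" using w u1 u2 by linarith+
      then have "w = u1 \<or> w = u2" using inU[of w] w by blast
      then show False using w by auto
    qed
    have noup2: "\<forall>w. u2 < w \<and> w < u1 + M \<longrightarrow> \<not> (P w \<and> \<not> P (w - 1))"
    proof (intro allI impI notI)
      fix w assume w: "u2 < w \<and> w < u1 + M" "P w \<and> \<not> P (w - 1)"
      have "u1 \<le> w" "w < u1 + M" using w U12 by linarith+
      then have "w = u1 \<or> w = u2" using inU[of w] w by blast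
      then show False using w U12 by auto
    qed
    obtain e1 where e1: "u1 < e1" "e1 < u2" "\<forall>t. u1 \<le> t \<and> t < e1 \<longrightarrow> P t" "\<forall>t. e1 \<le> t \<and> t < u2 \<longrightarrow> \<not> P t"
      using run[OF u1(3) u2(4) U12(2) noup1] by auto
    obtain e2 where e2: "u2 < e2" "e2 < u1 + M" "\<forall>t. u2 \<le> t \<and> t < e2 \<longrightarrow> P t" "\<forall>t. e2 \<le> t \<and> t < u1 + M \<longrightarrow> \<not> P t"
      using run[OF u2(3) u1M _ noup2] u2 u1 by auto
    define r1 where "r1 = e1 - u1"
    define g1 where "g1 = u2 - e1"
    define r2 where "r2 = e2 - u2"
    define g2 where "g2 = u1 + M - e2"
    have "nat (e1 - u1) + nat (e2 - u2) \<le> cnt M P"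
      by (rule two_int[OF M per, where a = u1]) (use e1 e2 in auto)
    then have rle: "r1 + r2 \<le> int (cnt M P)" unfolding r1_def r2_def using e1 e2 by simp
    have "nat (u2 - e1) + nat (u1 + M - e2) \<le> cnt M (\<lambda>t. \<not> P t)"
      by (rule two_int[OF M per_not[OF per], where a = u1]) (use e1 e2 in auto)
    then have gle: "g1 + g2 \<le> int (cnt M (\<lambda>t. \<not> P t))" unfolding g1_def g2_def using e1 e2 by simp
    have sum: "r1 + g1 + r2 + g2 = M" unfolding r1_def g1_def r2_def g2_def by simp
    then have r6: "r1 + r2 \<ge> 6" "g1 + g2 \<ge> 6" using rle gle ccompl c1 c2 M by linarith+
    have pos: "r1 \<ge> 1" "g1 \<ge> 1" "r2 \<ge> 1" "g2 \<ge> 1" using e1 e2 unfolding r1_def g1_def r2_def g2_def by auto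
    have pnd: "per M (\<lambda>t. P t \<and> \<not> P (t - d))"
      by (intro per_and per_not per_shift' per)
    have pnd2: "per M (\<lambda>t. \<not> P t \<and> P (t - d))"
      by (intro per_and per_not per_shift' per)
    have "nat ((u1 + min r1 d) - (u1 + max 0 (d - g2))) + nat ((u2 + min r2 d) - (u2 + max 0 (d - g1)))
        \<le> cnt M (\<lambda>t. P t \<and> \<not> P (t - d))"
    proof (rule two_int[OF M pnd, where a = u1])
      show "\<forall>t. u1 + max 0 (d - g2) \<le> t \<and> t < u1 + min r1 d \<longrightarrow> u1 \<le> t \<and> t < u1 + M \<and> P t \<and> \<not> P (t - d)"
      proof (intro allI impI)
        fix t assume t: "u1 + max 0 (d - g2) \<le> t \<and> t < u1 + min r1 d"
        have "u1 \<le> t" "t < e1" using t mx[of "d - g2"] mn[of r1 d] unfolding r1_def by linarith+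
        then have "P t" using e1 by auto
        have "e2 \<le> t - d + M" "t - d + M < u1 + M" using t mx[of "d - g2"] mn[of r1 d] unfolding g2_def by linarith+
        then have "\<not> P (t - d + M)" using e2 by auto
        then have "\<not> P (t - d)" using PM by simp
        then show "u1 \<le> t \<and> t < u1 + M \<and> P t \<and> \<not> P (t - d)" using \<open>P t\<close> \<open>u1 \<le> t\<close> \<open>t < e1\<close> e1 e2 U12 by auto
      qed
      show "\<forall>t. u2 + max 0 (d - g1) \<le> t \<and> t < u2 + min r2 d \<longrightarrow> u1 \<le> t \<and> t < u1 + M \<and> P t \<and> \<not> P (t - d)"
      proof (intro allI impI)
        fix t assume t: "u2 + max 0 (d - g1) \<le> t \<and> t < u2 + min r2 d"
        have "u2 \<le> t" "t < e2" using t mx[of "d - g1"] mn[of r2 d] unfolding r2_def by linarith+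
        then have "P t" using e2 by auto
        have "e1 \<le> t - d" "t - d < u2" using t mx[of "d - g1"] mn[of r2 d] unfolding g1_def by linarith+
        then have "\<not> P (t - d)" using e1 by auto
        then show "u1 \<le> t \<and> t < u1 + M \<and> P t \<and> \<not> P (t - d)" using \<open>P t\<close> \<open>u2 \<le> t\<close> \<open>t < e2\<close> e1 e2 U12 by auto
      qed
      show "\<forall>t. \<not> ((u1 + max 0 (d - g2) \<le> t \<and> t < u1 + min r1 d) \<and> (u2 + max 0 (d - g1) \<le> t \<and> t < u2 + min r2 d))"
        using mx mn e1 unfolding r1_def by (smt (verit))
    qed
    then have T1: "nat (min r1 d - max 0 (d - g2)) + nat (min r2 d - max 0 (d - g1)) \<le> 2" using Tp by simp
    have "nat ((e1 + min g1 d) - (e1 + max 0 (d - r1))) + nat ((e2 + min g2 d) - (e2 + max 0 (d - r2)))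
        \<le> cnt M (\<lambda>t. \<not> P t \<and> P (t - d))"
    proof (rule two_int[OF M pnd2, where a = u1])
      show "\<forall>t. e1 + max 0 (d - r1) \<le> t \<and> t < e1 + min g1 d \<longrightarrow> u1 \<le> t \<and> t < u1 + M \<and> \<not> P t \<and> P (t - d)"
      proof (intro allI impI)
        fix t assume t: "e1 + max 0 (d - r1) \<le> t \<and> t < e1 + min g1 d"
        have "e1 \<le> t" "t < u2" using t mx[of "d - r1"] mn[of g1 d] unfolding g1_def by linarith+
        then have "\<not> P t" using e1 by auto
        have "u1 \<le> t - d" "t - d < e1" using t mx[of "d - r1"] mn[of g1 d] unfolding r1_def by linarith+
        then have "P (t - d)" using e1 by auto
        then show "u1 \<le> t \<and> t < u1 + M \<and> \<not> P t \<and> P (t - d)" using \<open>\<not> P t\<close> \<open>e1 \<le> t\<close> \<open>t < u2\<close> e1 e2 U12 u2 by auto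
      qed
      show "\<forall>t. e2 + max 0 (d - r2) \<le> t \<and> t < e2 + min g2 d \<longrightarrow> u1 \<le> t \<and> t < u1 + M \<and> \<not> P t \<and> P (t - d)"
      proof (intro allI impI)
        fix t assume t: "e2 + max 0 (d - r2) \<le> t \<and> t < e2 + min g2 d"
        have "e2 \<le> t" "t < u1 + M" using t mx[of "d - r2"] mn[of g2 d] unfolding g2_def by linarith+
        then have "\<not> P t" using e2 by auto
        have "u2 \<le> t - d" "t - d < e2" using t mx[of "d - r2"] mn[of g2 d] unfolding r2_def by linarith+
        then have "P (t - d)" using e2 by auto
        then show "u1 \<le> t \<and> t < u1 + M \<and> \<not> P t \<and> P (t - d)" using \<open>\<not> P t\<close> \<open>e2 \<le> t\<close> \<open>t < u1 + M\<close> e1 e2 U12 by auto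
      qed
      show "\<forall>t. \<not> ((e1 + max 0 (d - r1) \<le> t \<and> t < e1 + min g1 d) \<and> (e2 + max 0 (d - r2) \<le> t \<and> t < e2 + min g2 d))"
        using mx mn e2 unfolding g1_def by (smt (verit))
    qed
    then have T2: "nat (min g1 d - max 0 (d - r1)) + nat (min g2 d - max 0 (d - r2)) \<le> 2" using upd by simp
    show False using num2[OF pos _ r6 d T1 T2] sum MH by simp
  qed
qed


lemma core:
  fixes M H d :: int and P :: "int \<Rightarrow> bool"
  assumes MH: "M = 2*H" and per: "per M P"
    and c1: "6 \<le> cnt M P" and c2: "int (cnt M P) + 6 \<le> M"
    and up1: "cnt M (\<lambda>t. \<not> P t \<and> P (t - 1)) \<le> 2"
    and upd: "cnt M (\<lambda>t. \<not> P t \<and> P (t - d)) \<le> 2"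
    and d: "0 \<le> d" "d < M"
  shows "d \<in> {0, 1, 2, H - 1, H, H + 1, M - 2, M - 1}"
proof (rule ccontr)
  assume nd: "d \<notin> {0, 1, 2, H - 1, H, H + 1, M - 2, M - 1}"
  have M: "M > 0" using c1 c2 by linarith
  show False
  proof (cases "d \<le> H")
    case True
    then have "3 \<le> d" "d \<le> H - 2" using nd d by auto
    then show False using core2[OF MH per c1 c2 up1 upd] by blast
  next
    case False
    then have dd: "3 \<le> M - d" "M - d \<le> H - 2" using nd d MH by auto
    have "cnt M (\<lambda>t. \<not> P t \<and> P (t - (M - (M - d)))) = cnt M (\<lambda>t. \<not> P t \<and> P (t - (M - d)))"
      by (rule neg_shift[OF M per])
    then have "cnt M (\<lambda>t. \<not> P t \<and> P (t - (M - d))) \<le> 2" using upd by simp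
    then show False using core2[OF MH per c1 c2 up1 _ dd] by blast
  qed
qed

lemma ss_add:
  "subset_sums M (D + {#z#}) = subset_sums M D \<union> (\<lambda>a. (a + z) mod M) ` subset_sums M D"
proof
  show "subset_sums M (D + {#z#}) \<subseteq> subset_sums M D \<union> (\<lambda>a. (a + z) mod M) ` subset_sums M D"
  proof
    fix v assume "v \<in> subset_sums M (D + {#z#})"
    then obtain S where S: "S \<subseteq># D + {#z#}" "v = sum_mset S mod M" unfolding subset_sums_def by blast
    show "v \<in> subset_sums M D \<union> (\<lambda>a. (a + z) mod M) ` subset_sums M D"
    proof (cases "z \<in># S")
      case True
      have S': "S - {#z#} \<subseteq># D" using S(1) by (simp only: subset_eq_diff_conv)
      have "sum_mset S = z + sum_mset (S - {#z#})" using True by (rule sum_mset.remove)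
      then have "sum_mset S = sum_mset (S - {#z#}) + z" by simp
      then have "v = (sum_mset (S - {#z#}) mod M + z) mod M" using S(2) by (simp add: mod_add_left_eq)
      moreover have "sum_mset (S - {#z#}) mod M \<in> subset_sums M D" using S' unfolding subset_sums_def by blast
      ultimately show ?thesis by blast
    next
      case False
      have "S - {#z#} = S" using False by (rule diff_single_trivial)
      moreover have "S - {#z#} \<subseteq># D" using S(1) by (simp only: subset_eq_diff_conv)
      ultimately have "S \<subseteq># D" by simp
      then show ?thesis using S(2) unfolding subset_sums_def by blast
    qed
  qed
next
  show "subset_sums M D \<union> (\<lambda>a. (a + z) mod M) ` subset_sums M D \<subseteq> subset_sums M (D + {#z#})"
  proof
    fix v assume "v \<in> subset_sums M D \<union> (\<lambda>a. (a + z) mod M) ` subset_sums M D"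
    then show "v \<in> subset_sums M (D + {#z#})"
    proof
      assume "v \<in> subset_sums M D"
      then obtain S where S: "S \<subseteq># D" "v = sum_mset S mod M" unfolding subset_sums_def by blast
      have "S \<subseteq># D + {#z#}" using S(1) mset_subset_eq_add_left[of D "{#z#}"] by (rule subset_mset.order_trans)
      then show ?thesis using S(2) unfolding subset_sums_def by blast
    next
      assume "v \<in> (\<lambda>a. (a + z) mod M) ` subset_sums M D"
      then obtain S where S: "S \<subseteq># D" "v = (sum_mset S mod M + z) mod M" unfolding subset_sums_def by blast
      have "S + {#z#} \<subseteq># D + {#z#}" using S(1) by simp
      moreover have "v = sum_mset (S + {#z#}) mod M" using S(2) by (simp add: mod_add_left_eq mod_add_right_eq add.commute)
      ultimately show ?thesis unfolding subset_sums_def by blast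
    qed
  qed
qed

theorem lemma3p7:
  fixes k r i :: nat and C Ci :: "int multiset" and x :: int
  defines "M \<equiv> (2::int) ^ (k + 1)"
  assumes k: "k \<ge> 1"
    and sizeC: "size C = 2 ^ k + r"
    and nonzero: "\<forall>c\<in>#C. c mod M \<noteq> 0"
    and no_half: "\<forall>S. S \<subseteq># C \<longrightarrow> sum_mset S mod M \<noteq> 2 ^ k"
    and no_compress: "\<forall>lam::int. odd lam \<longrightarrow> \<not> type1_compressible M (scale_mset M lam C)"
    and Ci_sub: "Ci \<subseteq># C" and Ci_size: "size Ci = i"
    and x_in: "x \<in># C - Ci"
    and x_max: "\<forall>y\<in>#C - Ci.
        card (subset_sums M (Ci + {#y#}) - subset_sums M Ci)
          \<le> card (subset_sums M (Ci + {#x#}) - subset_sums M Ci)"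
  shows "card (subset_sums M (Ci + {#x#}) - subset_sums M Ci) > 2
    \<or> card (subset_sums M Ci) \<le> 5 \<or> int (card (subset_sums M Ci)) \<ge> M - 5
    \<or> (\<forall>y\<in>#C - Ci. even y)
    \<or> (\<exists>u::int. odd u \<and> (\<forall>y\<in>#C - Ci. y mod M \<in>
          {u mod M, (-u) mod M, (2^k - u) mod M, (-(2^k - u)) mod M}))"
proof (rule ccontr)
  assume neg: "\<not> ?thesis"
  define H where "H = (2::int) ^ k"
  have MH: "M = 2 * H" unfolding M_def H_def by simp
  have M0: "M > 0" unfolding M_def by simp
  define A where "A = subset_sums M Ci"
  have Asub: "A \<subseteq> {0..<M}" unfolding A_def subset_sums_def using M0 by auto
  define P where "P t = (t mod M \<in> A)" for t
  have perP: "per M P" unfolding per_def P_def by auto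
  have cntA: "cnt M P = card A"
  proof -
    have "{t \<in> {0..<M}. P t} = A"
    proof
      show "{t \<in> {0..<M}. P t} \<subseteq> A" unfolding P_def by auto
      show "A \<subseteq> {t \<in> {0..<M}. P t}"
      proof
        fix a assume a: "a \<in> A"
        then have "a \<in> {0..<M}" using Asub by auto
        then have "a mod M = a" by simp
        then show "a \<in> {t \<in> {0..<M}. P t}" using a \<open>a \<in> {0..<M}\<close> unfolding P_def by simp
      qed
    qed
    then show ?thesis unfolding cnt_def by simp
  qed
  have newc: "card (subset_sums M (Ci + {#z#}) - A) = cnt M (\<lambda>t. \<not> P t \<and> P (t - z))" for z
  proof -
    have "subset_sums M (Ci + {#z#}) - A = (\<lambda>a. (a + z) mod M) ` A - A"
      unfolding A_def ss_add by blast
    also have "\<dots> = {t \<in> {0..<M}. \<not> P t \<and> P (t - z)}"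
    proof
      show "(\<lambda>a. (a + z) mod M) ` A - A \<subseteq> {t \<in> {0..<M}. \<not> P t \<and> P (t - z)}"
      proof
        fix t assume "t \<in> (\<lambda>a. (a + z) mod M) ` A - A"
        then obtain a where a: "a \<in> A" "t = (a + z) mod M" "t \<notin> A" by blast
        have t0: "0 \<le> t" "t < M" using a(2) M0 by auto
        then have "t mod M = t" by simp
        then have "\<not> P t" using a(3) unfolding P_def by simp
        moreover have "(t - z) mod M = a"
        proof -
          have "(t - z) mod M = (a + z - z) mod M" unfolding a(2) by (simp add: mod_diff_left_eq)
          also have "\<dots> = a" using a(1) Asub by auto
          finally show ?thesis .
        qed
        then have "P (t - z)" unfolding P_def using a(1) by simp
        ultimately show "t \<in> {t \<in> {0..<M}. \<not> P t \<and> P (t - z)}" using t0 by simp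
      qed
      show "{t \<in> {0..<M}. \<not> P t \<and> P (t - z)} \<subseteq> (\<lambda>a. (a + z) mod M) ` A - A"
      proof
        fix t assume t: "t \<in> {t \<in> {0..<M}. \<not> P t \<and> P (t - z)}"
        then have tm: "t mod M = t" by simp
        then have "t \<notin> A" using t unfolding P_def by simp
        moreover have "(t - z) mod M \<in> A" using t unfolding P_def by simp
        moreover have "((t - z) mod M + z) mod M = t" using tm by (simp add: mod_add_left_eq)
        ultimately show "t \<in> (\<lambda>a. (a + z) mod M) ` A - A" by force
      qed
    qed
    finally show ?thesis unfolding cnt_def by simp
  qed
  have n1': "\<not> card (subset_sums M (Ci + {#x#}) - A) > 2" using neg unfolding A_def by blast
  have n1: "card (subset_sums M (Ci + {#x#}) - A) \<le> 2" using n1' by linarith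
  have n2': "\<not> card A \<le> 5" using neg unfolding A_def by blast
  have n2: "6 \<le> card A" using n2' by linarith
  have n3': "\<not> int (card A) \<ge> M - 5" using neg unfolding A_def by blast
  have n3: "int (card A) + 6 \<le> M" using n3' by linarith
  have n4: "\<not> (\<forall>y\<in>#C - Ci. even y)" using neg by blast
  then obtain y where y: "y \<in># C - Ci" "odd y" by blast
  have n5: "\<not> (\<forall>z\<in>#C - Ci. z mod M \<in> {y mod M, (-y) mod M, (2^k - y) mod M, (-(2^k - y)) mod M})"
    using neg y(2) by blast
  have hz: "cnt M (\<lambda>t. \<not> P t \<and> P (t - z)) \<le> 2" if "z \<in># C - Ci" for z
  proof -
    have "card (subset_sums M (Ci + {#z#}) - A) \<le> card (subset_sums M (Ci + {#x#}) - A)"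
      using x_max that unfolding A_def by blast
    then have "card (subset_sums M (Ci + {#z#}) - A) \<le> 2" using n1 by linarith
    then show ?thesis using newc[of z] by simp
  qed
  have "coprime y M" unfolding M_def using y(2) by simp
  then obtain l where "[y * l = 1] (mod M)" using cong_solve_coprime_int by blast
  then have inv: "M dvd (y * l - 1)" by (simp add: cong_iff_dvd_diff)
  have lodd: "odd l"
  proof
    assume "even l"
    then have "even (y * l - 1 + 1)" by simp
    moreover have "even (y * l - 1)" using inv unfolding MH by (meson dvd_trans dvd_triv_left)
    ultimately show False by simp
  qed
  define P' where "P' t = P (y * t)" for t
  have perP': "per M P'" unfolding per_def P'_def
  proof (intro allI impI)
    fix a b :: int assume "a mod M = b mod M"
    then have "(y * a) mod M = (y * b) mod M" by (metis mod_mult_right_eq)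
    then show "P (y * a) = P (y * b)" using perP unfolding per_def by blast
  qed
  have cP': "cnt M P' = cnt M P"
    using cnt_affine[OF M0 perP inv, of 0] unfolding P'_def by simp
  have key: "cnt M (\<lambda>t. \<not> P' t \<and> P' (t - (l * z) mod M)) \<le> 2" if "z \<in># C - Ci" for z
  proof -
    have eq: "P' (t - (l * z) mod M) = P (y * t - z)" for t
    proof -
      have "M dvd (y * t - y * ((l * z) mod M)) - (y * t - z)"
      proof -
        have "M dvd (l * z) - (l * z) mod M" by (simp add: mod_eq_dvd_iff)
        then have d1: "M dvd y * ((l * z) - (l * z) mod M)" by (rule dvd_mult)
        have d2: "M dvd (y * l - 1) * z" using inv by (rule dvd_mult2)
        have "(y * t - y * ((l * z) mod M)) - (y * t - z) = y * ((l * z) - (l * z) mod M) - (y * l - 1) * z"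
          by (simp add: algebra_simps)
        then show ?thesis using d1 d2 dvd_diff by metis
      qed
      then have "(y * t - y * ((l * z) mod M)) mod M = (y * t - z) mod M" by (simp add: mod_eq_dvd_iff)
      then have "(y * (t - (l * z) mod M)) mod M = (y * t - z) mod M" by (simp add: right_diff_distrib)
      then show ?thesis unfolding P'_def using perP unfolding per_def by blast
    qed
    let ?Q = "\<lambda>s. \<not> P s \<and> P (s - z)"
    have pq: "per M ?Q" by (intro per_and per_not per_shift' perP)
    have "cnt M (\<lambda>t. \<not> P' t \<and> P' (t - (l * z) mod M)) = cnt M (\<lambda>t. ?Q (y * t + 0))"
      unfolding eq by (simp add: P'_def)
    also have "\<dots> = cnt M ?Q" by (rule cnt_affine[OF M0 pq inv])
    finally show ?thesis using hz[OF that] by simp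
  qed
  have ly: "(l * y) mod M = 1"
  proof -
    have "(l * y) mod M = 1 mod M" using inv by (simp add: mod_eq_dvd_iff mult.commute)
    then show ?thesis using MH n2 n3 by simp
  qed
  have M12: "M \<ge> 12" using n2 n3 by linarith
  have up1: "cnt M (\<lambda>t. \<not> P' t \<and> P' (t - 1)) \<le> 2" using key[OF y(1)] ly by simp
  have c1: "6 \<le> cnt M P'" using cP' cntA n2 by simp
  have c2: "int (cnt M P') + 6 \<le> M" using cP' cntA n3 by simp
  obtain m where ym: "y = 2 * m + 1" using y(2) by (rule oddE)
  have all: "z mod M \<in> {y mod M, (-y) mod M, (2^k - y) mod M, (-(2^k - y)) mod M}" if z: "z \<in># C - Ci" for z
  proof -
    define d where "d = (l * z) mod M"
    have d0: "0 \<le> d" "d < M" unfolding d_def using M0 by auto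
    have dset: "d \<in> {0, 1, 2, H - 1, H, H + 1, M - 2, M - 1}"
      using core[OF MH perP' c1 c2 up1 key[OF z, folded d_def] d0] .
    have zC: "z \<in># C" using z by (rule in_diffD)
    have zd: "z mod M = (y * d) mod M"
    proof -
      have "M dvd (l * z) - d" unfolding d_def by (simp add: mod_eq_dvd_iff)
      then have d1: "M dvd y * ((l * z) - d)" by (rule dvd_mult)
      have d2: "M dvd (y * l - 1) * z" using inv by (rule dvd_mult2)
      have "z - y * d = y * ((l * z) - d) - (y * l - 1) * z" by (simp add: algebra_simps)
      then have "M dvd z - y * d" using d1 d2 dvd_diff by metis
      then show ?thesis by (simp add: mod_eq_dvd_iff)
    qed
    have Hk: "H = 2 ^ k" unfolding H_def by simp
    show ?thesis
    proof -
      consider "d = 0" | "d = 1" | "d = 2" | "d = H - 1" | "d = H" | "d = H + 1" | "d = M - 2" | "d = M - 1"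
        using dset by auto
      then show ?thesis
      proof cases
        case 1
        then have "z mod M = 0" using zd by simp
        then show ?thesis using nonzero zC by auto
      next
        case 2
        then show ?thesis using zd by simp
      next
        case 8
        have "y * d - (- y) = M * y" unfolding 8 by (simp add: algebra_simps)
        then have "(y * d) mod M = (- y) mod M" by (simp add: mod_eq_dvd_iff)
        then show ?thesis using zd by simp
      next
        case 4
        have "y * d - (2 ^ k - y) = M * m" unfolding 4 ym Hk[symmetric] MH by (simp add: algebra_simps)
        then have "(y * d) mod M = (2 ^ k - y) mod M" by (simp add: mod_eq_dvd_iff)
        then show ?thesis using zd by simp
      next
        case 6
        have "y * d - (- (2 ^ k - y)) = M * (m + 1)" unfolding 6 ym Hk[symmetric] MH by (simp add: algebra_simps)
        then have "(y * d) mod M = (- (2 ^ k - y)) mod M" by (simp add: mod_eq_dvd_iff)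
        then show ?thesis using zd by simp
      next
        case 5
        have "y * d - H = M * m" unfolding 5 ym MH by (simp add: algebra_simps)
        then have "(y * d) mod M = H mod M" by (simp add: mod_eq_dvd_iff)
        moreover have "H mod M = H" using MH M0 by simp
        ultimately have "sum_mset {#z#} mod M = 2 ^ k" using zd Hk by simp
        moreover have "{#z#} \<subseteq># C" using zC by simp
        ultimately show ?thesis using no_half by blast
      next
        case 3
        then have dd: "d = 2 \<or> d = M - 2" by simp
        have "type1_compressible M (scale_mset M l C)"
          unfolding type1_compressible_def
        proof (intro exI[of _ "1::nat"] conjI)
          have "(l * y) mod M \<in># scale_mset M l C" unfolding scale_mset_def using y(1) by (auto dest: in_diffD)
          then have "1 \<in># filter_mset (\<lambda>a. a mod M = 1 mod M \<or> a mod M = (-1) mod M) (scale_mset M l C)"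
            using ly by simp
          then have h: "size (filter_mset (\<lambda>a. a mod M = 1 mod M \<or> a mod M = (-1) mod M) (scale_mset M l C)) \<noteq> 0"
            by (metis size_eq_0_iff_empty empty_iff set_mset_empty)
          show "size (filter_mset (\<lambda>a. a mod M = 1 mod M \<or> a mod M = (-1) mod M) (scale_mset M l C)) \<ge> 1"
            using h by presburger
          have "d \<in># scale_mset M l C" unfolding scale_mset_def d_def using zC by simp
          moreover have "res_abs M d = 2" unfolding res_abs_def using dd M12 d0 by auto
          ultimately show "\<exists>t\<in>#scale_mset M l C. 1 < res_abs M t \<and> res_abs M t \<le> int 1 + 1"
            by (intro bexI[of _ d]) simp_all
        qed simp
        then show ?thesis using no_compress lodd by blast
      next
        case 7
        then have dd: "d = 2 \<or> d = M - 2" by simp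
        have "type1_compressible M (scale_mset M l C)"
          unfolding type1_compressible_def
        proof (intro exI[of _ "1::nat"] conjI)
          have "(l * y) mod M \<in># scale_mset M l C" unfolding scale_mset_def using y(1) by (auto dest: in_diffD)
          then have "1 \<in># filter_mset (\<lambda>a. a mod M = 1 mod M \<or> a mod M = (-1) mod M) (scale_mset M l C)"
            using ly by simp
          then have h: "size (filter_mset (\<lambda>a. a mod M = 1 mod M \<or> a mod M = (-1) mod M) (scale_mset M l C)) \<noteq> 0"
            by (metis size_eq_0_iff_empty empty_iff set_mset_empty)
          show "size (filter_mset (\<lambda>a. a mod M = 1 mod M \<or> a mod M = (-1) mod M) (scale_mset M l C)) \<ge> 1"
            using h by presburger
          have "d \<in># scale_mset M l C" unfolding scale_mset_def d_def using zC by simp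
          moreover have "res_abs M d = 2" unfolding res_abs_def using dd M12 d0 by auto
          ultimately show "\<exists>t\<in>#scale_mset M l C. 1 < res_abs M t \<and> res_abs M t \<le> int 1 + 1"
            by (intro bexI[of _ d]) simp_all
        qed simp
        then show ?thesis using no_compress lodd by blast
      qed
    qed
  qed
  then show False using n5 by blast
qed

end
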